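(* Let $0\le\alpha\le\beta\le\pi/2$, $P_1,P_2>0$, and let $\theta^*\in[\alpha,\beta]$ be a maximizer of $\phi$ on $[\alpha,\beta]$. (i) On $[\theta^*,\beta]$ consider the upper-diagonal corner curve $x(\theta)=\frac12\ln(1+\phi(\theta))-\frac12\ln(1+\phi_2(\theta))$, $y(\theta)=\frac12\ln(1+\phi_2(\theta))$; then along this curve $\frac{d^2y}{dx^2}\le0$, i.e. $y$ is a concave function of $x$. (ii) On $[\alpha,\theta^*]$ consider the lower-diagonal corner curve $x(\theta)=\frac12\ln(1+\phi_1(\theta))$, $y(\theta)=\frac12\ln(1+\phi(\theta))-\frac12\ln(1+\phi_1(\theta))$; then along this curve $y$ is likewise a concave function of $x$.
   Context: $\phi_1(\theta)=P_1\cos^2(\theta-\alpha)$, $\phi_2(\theta)=P_2\cos^2(\theta-\beta)$, $\phi=\phi_1+\phi_2$. These curves are the corner points (maximizing $R_2$ then $R_1$, resp. $R_1$ then $R_2$, on the dominant face) of the pentagonal rate sets $\{(R_1,R_2)\ge0:R_1\le\mathcal C(\phi_1(\theta)),R_2\le\mathcal C(\phi_2(\theta)),R_1+R_2\le\mathcal C(\phi(\theta))\}$, with rates in nats. *)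

theory Defs
  imports "HOL-Analysis.Analysis"
begin

definition phi1 :: "real \<Rightarrow> real \<Rightarrow> real \<Rightarrow> real" where
  "phi1 P1 \<alpha> \<theta> = P1 * (cos (\<theta> - \<alpha>))\<^sup>2"

definition phi2 :: "real \<Rightarrow> real \<Rightarrow> real \<Rightarrow> real" where
  "phi2 P2 \<beta> \<theta> = P2 * (cos (\<theta> - \<beta>))\<^sup>2"

definition phi :: "real \<Rightarrow> real \<Rightarrow> real \<Rightarrow> real \<Rightarrow> real \<Rightarrow> real" where
  "phi P1 P2 \<alpha> \<beta> \<theta> = phi1 P1 \<alpha> \<theta> + phi2 P2 \<beta> \<theta>"

definition Cap :: "real \<Rightarrow> real" where
  "Cap s = ln (1 + s) / 2"

end

theory Submission
  imports Defs
begin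


lemma trig_mono:
  fixes \<alpha> \<beta> s t :: real
  assumes "\<alpha> \<le> s" "s \<le> t" "t \<le> \<beta>" "\<beta> - \<alpha> \<le> pi/2"
  shows "sin (2*(s-\<alpha>)) * sin (2*(\<beta>-t)) \<le> sin (2*(t-\<alpha>)) * sin (2*(\<beta>-s))"
proof -
  define u where "u = 2*(s-\<alpha>) + 2*(\<beta>-t)"
  define v where "v = 2*(t-\<alpha>) + 2*(\<beta>-s)"
  have e1: "sin (2*(s-\<alpha>)) * sin (2*(\<beta>-t)) = (cos (2*(s+t-\<alpha>-\<beta>)) - cos u)/2"
    unfolding sin_times_sin u_def by (simp add: algebra_simps)
  have e2: "sin (2*(t-\<alpha>)) * sin (2*(\<beta>-s)) = (cos (2*(s+t-\<alpha>-\<beta>)) - cos v)/2"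
    unfolding sin_times_sin v_def by (simp add: algebra_simps)
  have "cos u - cos v = 2 * sin ((u+v)/2) * sin ((v-u)/2)" by (rule cos_diff_cos)
  also have "(u+v)/2 = 2*(\<beta>-\<alpha>)" unfolding u_def v_def by (simp add: field_simps)
  also have "(v-u)/2 = 2*(t-s)" unfolding u_def v_def by (simp add: field_simps)
  finally have "cos u - cos v = 2 * sin (2*(\<beta>-\<alpha>)) * sin (2*(t-s))" .
  moreover have "sin (2*(\<beta>-\<alpha>)) \<ge> 0" using assms by (intro sin_ge_zero) auto
  moreover have "sin (2*(t-s)) \<ge> 0" using assms by (intro sin_ge_zero) auto
  ultimately have "cos u - cos v \<ge> 0" by simp
  thus ?thesis unfolding e1 e2 by simp
qed

lemma cap_deriv:
  assumes "(f has_real_derivative f') (at t)" "f t \<ge> 0"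
  shows "((\<lambda>t. ln (1 + f t) / 2) has_real_derivative f' / (2 * (1 + f t))) (at t)"
  using assms by (auto intro!: derivative_eq_intros simp: field_simps)

lemma cos2_deriv:
  "((\<lambda>t. P * (cos (t - c))\<^sup>2) has_real_derivative - P * sin (2*(t-c))) (at t)"
proof -
  have "sin (2*(t-c)) = 2 * sin (t-c) * cos (t-c)" by (rule sin_double)
  thus ?thesis by (auto intro!: derivative_eq_intros simp: field_simps power2_eq_square)
qed

lemma cos2_deriv':
  "((\<lambda>t. P * (cos (t - c))\<^sup>2) has_real_derivative P * sin (2*(c-t))) (at t)"
proof -
  have "sin (2*(c-t)) = - sin (2*(t-c))" by (metis minus_diff_eq mult_minus_right sin_minus)
  thus ?thesis using cos2_deriv[of P c t] by simp
qed



lemma three_point: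
  fixes x y X Y :: "real \<Rightarrow> real"
  assumes dx: "\<And>t. (x has_real_derivative X t) (at t)"
    and dy: "\<And>t. (y has_real_derivative Y t) (at t)"
    and neg: "\<And>t. p < t \<Longrightarrow> t < q \<Longrightarrow> X t < 0"
    and mono: "\<And>s t. p < s \<Longrightarrow> s \<le> t \<Longrightarrow> t < q \<Longrightarrow> Y s / X s \<le> Y t / X t"
    and o: "p \<le> c" "c < b" "b < a" "a \<le> q"
  shows "(y b - y a) * (x c - x b) \<ge> (y c - y b) * (x b - x a)"
proof -
  have cx: "isCont x t" for t using dx by (rule DERIV_isCont)
  have cy: "isCont y t" for t using dy by (rule DERIV_isCont)
  have dec: "x t < x s" if "p \<le> s" "s < t" "t \<le> q" for s t
    apply (rule DERIV_neg_imp_decreasing_open[OF that(2)])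
    using dx neg that apply fastforce
    using cx by (simp add: continuous_at_imp_continuous_on)
  obtain \<xi> where \<xi>: "b < \<xi>" "\<xi> < a" "(y a - y b) * X \<xi> = (x a - x b) * Y \<xi>"
    using GMVT'[of b a y x X Y] o cx cy dx dy by blast
  obtain \<eta> where \<eta>: "c < \<eta>" "\<eta> < b" "(y b - y c) * X \<eta> = (x b - x c) * Y \<eta>"
    using GMVT'[of c b y x X Y] o cx cy dx dy by blast
  have X1: "X \<xi> < 0" using neg \<xi> o by auto
  have X2: "X \<eta> < 0" using neg \<eta> o by auto
  have r: "Y \<eta> / X \<eta> \<le> Y \<xi> / X \<xi>" using mono \<xi> \<eta> o by auto
  have e1: "y b - y a = (x b - x a) * (Y \<xi> / X \<xi>)" using \<xi>(3) X1 by (simp add: field_simps)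
  have e2: "y c - y b = (x c - x b) * (Y \<eta> / X \<eta>)" using \<eta>(3) X2 by (simp add: field_simps)
  have pos: "(x b - x a) * (x c - x b) \<ge> 0" using dec[of b a] dec[of c b] o by auto
  have "(y c - y b) * (x b - x a) = ((x b - x a) * (x c - x b)) * (Y \<eta> / X \<eta>)" using e2 by simp
  also have "\<dots> \<le> ((x b - x a) * (x c - x b)) * (Y \<xi> / X \<xi>)" using r pos by (rule mult_left_mono)
  also have "\<dots> = (y b - y a) * (x c - x b)" using e1 by simp
  finally show ?thesis .
qed

lemma curve_concave:
  fixes x y X Y :: "real \<Rightarrow> real"
  assumes pq: "p \<le> q"
    and dx: "\<And>t. (x has_real_derivative X t) (at t)"
    and dy: "\<And>t. (y has_real_derivative Y t) (at t)"
    and neg: "\<And>t. p < t \<Longrightarrow> t < q \<Longrightarrow> X t < 0"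
    and mono: "\<And>s t. p < s \<Longrightarrow> s \<le> t \<Longrightarrow> t < q \<Longrightarrow> Y s / X s \<le> Y t / X t"
  shows "\<exists>g. concave_on (x ` {p..q}) g \<and> (\<forall>t\<in>{p..q}. y t = g (x t))"
proof -
  have cx: "isCont x t" for t using dx by (rule DERIV_isCont)
  have dec: "x t < x s" if "p \<le> s" "s < t" "t \<le> q" for s t
    apply (rule DERIV_neg_imp_decreasing_open[OF that(2)])
    using dx neg that apply fastforce
    using cx by (simp add: continuous_at_imp_continuous_on)
  have inj: "inj_on x {p..q}"
    unfolding inj_on_def by (metis atLeastAtMost_iff dec linorder_neqE_linordered_idom order_less_irrefl)
  define S where "S = x ` {p..q}"
  define g where "g u = y (inv_into {p..q} x u)" for u
  have gx: "g (x t) = y t" if "t \<in> {p..q}" for t using inj that by (simp add: g_def)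
  have convS: "convex S"
  proof -
    have "connected S" unfolding S_def
      by (rule connected_continuous_image) (auto simp: cx continuous_at_imp_continuous_on)
    thus ?thesis by (simp add: connected_convex_1)
  qed
  have key: "g ((1 - t) * u + t * v) \<ge> (1 - t) * g u + t * g v"
    if uS: "u \<in> S" and vS: "v \<in> S" and uv: "u < v" and t: "0 < t" "t < 1" for u v t
  proof -
    define w where "w = (1 - t) * u + t * v"
    have wS: "w \<in> S" using convS uS vS t unfolding w_def convex_alt by (metis less_eq_real_def real_scaleR_def)
    have m1: "0 < t * (v - u)" "0 < (1 - t) * (v - u)" using uv t by auto
    have uw: "u < w" "w < v" using m1 unfolding w_def by (auto simp: algebra_simps)
    obtain a where a: "a \<in> {p..q}" "u = x a" using uS S_def by auto
    obtain b where b: "b \<in> {p..q}" "w = x b" using wS S_def by auto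
    obtain c where c: "c \<in> {p..q}" "v = x c" using vS S_def by auto
    have ba: "b < a" using a b uw dec by (metis atLeastAtMost_iff linorder_neqE_linordered_idom order_less_asym)
    have cb: "c < b" using c b uw dec by (metis atLeastAtMost_iff linorder_neqE_linordered_idom order_less_asym)
    have tp: "(y b - y a) * (x c - x b) \<ge> (y c - y b) * (x b - x a)"
      apply (rule three_point[OF dx dy neg mono]) using a b c ba cb by auto
    hence "(g w - g u) * (v - w) \<ge> (g v - g w) * (w - u)" using a b c gx by simp
    moreover have "v - w = (1 - t) * (v - u)" "w - u = t * (v - u)" unfolding w_def by (auto simp: algebra_simps)
    ultimately have "(g w - g u) * (1 - t) * (v - u) \<ge> (g v - g w) * t * (v - u)" by (simp add: mult.assoc)
    hence "(g w - g u) * (1 - t) \<ge> (g v - g w) * t" using uv by simp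
    thus ?thesis unfolding w_def[symmetric] by (simp add: algebra_simps)
  qed
  have "concave_on S g"
    unfolding concave_on_iff
  proof (intro conjI convS ballI allI impI)
    fix u v a b :: real assume h: "u \<in> S" "v \<in> S" "0 \<le> a" "0 \<le> b" "a + b = 1"
    show "a * g u + b * g v \<le> g (a *\<^sub>R u + b *\<^sub>R v)"
    proof (cases "a = 0 \<or> b = 0 \<or> u = v")
      case True thus ?thesis using h by (auto simp: algebra_simps simp flip: distrib_right)
    next
      case False
      hence ab: "0 < a" "0 < b" "a < 1" "b < 1" using h by auto
      show ?thesis
      proof (cases "u < v")
        case True
        have e: "a = 1 - b" using h by simp
        show ?thesis unfolding e using key[of u v b] True h ab by simp
      next
        case F: False
        hence "v < u" using False by auto
        have e: "b = 1 - a" using h by simp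
        show ?thesis unfolding e using key[of v u a] \<open>v < u\<close> h ab by (simp add: algebra_simps)
      qed
    qed
  qed
  thus ?thesis using gx S_def by auto
qed


lemma aux_frac:
  fixes a k m n :: real
  shows "m > 0 \<Longrightarrow> n > 0 \<Longrightarrow> a / (2 * m) * k * (m / n) = k * a / (2 * n)"
  by (simp add: field_simps)

theorem lemma8:
  fixes P1 P2 \<alpha> \<beta> \<theta>s :: real
  assumes "0 \<le> \<alpha>" "\<alpha> \<le> \<beta>" "\<beta> \<le> pi / 2"
    and "P1 > 0" "P2 > 0"
    and "\<theta>s \<in> {\<alpha>..\<beta>}"
    and "\<forall>\<theta>\<in>{\<alpha>..\<beta>}. phi P1 P2 \<alpha> \<beta> \<theta> \<le> phi P1 P2 \<alpha> \<beta> \<theta>s"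
  shows "(\<exists>g. concave_on
              ((\<lambda>\<theta>. Cap (phi P1 P2 \<alpha> \<beta> \<theta>) - Cap (phi2 P2 \<beta> \<theta>)) ` {\<theta>s..\<beta>}) g
           \<and> (\<forall>\<theta>\<in>{\<theta>s..\<beta>}. Cap (phi2 P2 \<beta> \<theta>)
                 = g (Cap (phi P1 P2 \<alpha> \<beta> \<theta>) - Cap (phi2 P2 \<beta> \<theta>))))
    \<and> (\<exists>g. concave_on ((\<lambda>\<theta>. Cap (phi1 P1 \<alpha> \<theta>)) ` {\<alpha>..\<theta>s}) g
           \<and> (\<forall>\<theta>\<in>{\<alpha>..\<theta>s}. Cap (phi P1 P2 \<alpha> \<beta> \<theta>) - Cap (phi1 P1 \<alpha> \<theta>)
                 = g (Cap (phi1 P1 \<alpha> \<theta>))))"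
proof -
  note ab = assms(1,2,3) and P = assms(4,5) and ts = assms(6) and mx = assms(7)
  define f1 where "f1 = phi1 P1 \<alpha>"
  define f2 where "f2 = phi2 P2 \<beta>"
  define f where "f = phi P1 P2 \<alpha> \<beta>"
  define A where "A t = sin (2*(t-\<alpha>))" for t
  define B where "B t = sin (2*(\<beta>-t))" for t
  define D where "D t = - P1 * A t + P2 * B t" for t
  have df1: "(f1 has_real_derivative - P1 * A t) (at t)" for t
    unfolding f1_def phi1_def[abs_def] A_def by (rule cos2_deriv)
  have df2: "(f2 has_real_derivative P2 * B t) (at t)" for t
    unfolding f2_def phi2_def[abs_def] B_def by (rule cos2_deriv')
  have feq: "f = (\<lambda>t. f1 t + f2 t)" unfolding f_def f1_def f2_def phi_def[abs_def] by simp
  have df: "(f has_real_derivative D t) (at t)" for t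
    unfolding feq D_def by (intro DERIV_add df1 df2)
  have cf: "continuous_on S f" for S using df
    by (meson DERIV_isCont continuous_at_imp_continuous_on)
  have f1nn: "f1 t \<ge> 0" for t unfolding f1_def phi1_def using P by simp
  have f2nn: "f2 t \<ge> 0" for t unfolding f2_def phi2_def using P by simp
  have fnn: "f t \<ge> 0" for t unfolding feq using f1nn f2nn by (simp add: add_nonneg_nonneg)
  have Apos: "A t > 0" if "\<alpha> < t" "t < \<beta>" for t unfolding A_def using that ab by (intro sin_gt_zero) auto
  have Bpos: "B t > 0" if "\<alpha> < t" "t < \<beta>" for t unfolding B_def using that ab by (intro sin_gt_zero) auto
  have trig: "A s * B t \<le> A t * B s" if "\<alpha> < s" "s \<le> t" "t < \<beta>" for s t
    unfolding A_def B_def using that ab by (intro trig_mono) auto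
  have f1anti: "f1 t \<le> f1 s" if "\<alpha> \<le> s" "s \<le> t" "t \<le> \<beta>" for s t
  proof -
    have "cos (t-\<alpha>) \<le> cos (s-\<alpha>)" using that ab by (intro cos_monotone_0_pi_le) auto
    moreover have "cos (t-\<alpha>) \<ge> 0" using that ab by (intro cos_ge_zero) auto
    ultimately have "(cos (t-\<alpha>))\<^sup>2 \<le> (cos (s-\<alpha>))\<^sup>2" by (intro power_mono) auto
    thus ?thesis unfolding f1_def phi1_def using P by simp
  qed
  have f2mono: "f2 s \<le> f2 t" if "\<alpha> \<le> s" "s \<le> t" "t \<le> \<beta>" for s t
  proof -
    have "cos (\<beta>-s) \<le> cos (\<beta>-t)" using that ab by (intro cos_monotone_0_pi_le) auto
    moreover have "cos (\<beta>-s) \<ge> 0" using that ab by (intro cos_ge_zero) auto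
    ultimately have "(cos (\<beta>-s))\<^sup>2 \<le> (cos (\<beta>-t))\<^sup>2" by (intro power_mono) auto
    moreover have "cos (s-\<beta>) = cos (\<beta>-s)" "cos (t-\<beta>) = cos (\<beta>-t)"
      by (metis cos_minus minus_diff_eq)+
    ultimately show ?thesis unfolding f2_def phi2_def using P by simp
  qed
  have cap: "Cap u = ln (1 + u) / 2" for u by (simp add: Cap_def)
  have dcap: "((\<lambda>t. Cap (g t)) has_real_derivative g' / (2 * (1 + g t))) (at t)"
    if "(g has_real_derivative g') (at t)" "g t \<ge> 0" for g g' t
    unfolding cap by (rule cap_deriv[OF that])
  show ?thesis
  proof
    define K where "K t = 1 - P1 * A t / (P2 * B t)" for t
    define H where "H t = (1 + f2 t) / (1 + f t)" for t
    define Y where "Y t = P2 * B t / (2 * (1 + f2 t))" for t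
    define X where "X t = D t / (2 * (1 + f t)) - Y t" for t
    have DK: "D t = K t * (P2 * B t)" if "\<alpha> < t" "t < \<beta>" for t
      using Bpos[OF that] P unfolding K_def D_def by (simp add: field_simps)
    have Kmono: "K t \<le> K s" if "\<alpha> < s" "s \<le> t" "t < \<beta>" for s t
    proof -
      have b: "B s > 0" "B t > 0" using Bpos that by auto
      have "A s / B s \<le> A t / B t" using trig[OF that] b
        by (simp add: field_simps)
      hence "(P1 / P2) * (A s / B s) \<le> (P1 / P2) * (A t / B t)" using P
        by (intro mult_left_mono) auto
      hence "P1 * A s / (P2 * B s) \<le> P1 * A t / (P2 * B t)" by simp
      thus ?thesis unfolding K_def by simp
    qed
    have Kneg: "K t \<le> 0" if "\<theta>s < t" "t < \<beta>" for t
    proof (rule ccontr)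
      assume "\<not> K t \<le> 0"
      hence Kt: "K t > 0" by simp
      have "f \<theta>s < f t"
      proof (rule DERIV_pos_imp_increasing_open[OF that(1) _ cf])
        fix z assume z: "\<theta>s < z" "z < t"
        have za: "\<alpha> < z" "z < \<beta>" using z ts that by auto
        have "K z > 0" using Kmono[of z t] za z that Kt by auto
        hence "D z > 0" using DK[OF za] Bpos[OF za] P by simp
        thus "\<exists>y. (f has_real_derivative y) (at z) \<and> y > 0" using df by blast
      qed
      moreover have "t \<in> {\<alpha>..\<beta>}" using that ts by auto
      hence "f t \<le> f \<theta>s" using mx unfolding f_def by blast
      ultimately show False by simp
    qed
    have Hmono: "H s \<le> H t" if "\<alpha> \<le> s" "s \<le> t" "t \<le> \<beta>" for s t
    proof -
      have a: "f1 t \<le> f1 s" "f2 s \<le> f2 t" using f1anti f2mono that by auto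
      have "(1 + f2 s) * f1 t \<le> (1 + f2 t) * f1 s"
        using a f1nn f2nn by (intro mult_mono) auto
      hence "(1 + f2 s) * (1 + f t) \<le> (1 + f2 t) * (1 + f s)" unfolding feq by (simp add: algebra_simps)
      thus ?thesis unfolding H_def using fnn[of s] fnn[of t] by (simp add: divide_simps)
    qed
    have Hpos: "H t > 0" for t unfolding H_def using fnn f2nn by (simp add: add_pos_nonneg)
    have XY: "X t = Y t * (K t * H t - 1)" if "\<alpha> < t" "t < \<beta>" for t
    proof -
      have "Y t * K t * H t = D t / (2 * (1 + f t))"
      proof -
        have "1 + f t > 0" "1 + f2 t > 0" using fnn[of t] f2nn[of t] by linarith+
        thus ?thesis
          unfolding Y_def H_def DK[OF that] by (simp only: aux_frac[of "1 + f2 t" "1 + f t"])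
      qed
      thus ?thesis unfolding X_def by (simp add: algebra_simps)
    qed
    have Ypos: "Y t > 0" if "\<alpha> < t" "t < \<beta>" for t
      unfolding Y_def using Bpos[OF that] P f2nn[of t] by (simp add: add_pos_nonneg)
    have "\<exists>g. concave_on ((\<lambda>\<theta>. Cap (f \<theta>) - Cap (f2 \<theta>)) ` {\<theta>s..\<beta>}) g
           \<and> (\<forall>t\<in>{\<theta>s..\<beta>}. Cap (f2 t) = g (Cap (f t) - Cap (f2 t)))"
    proof (rule curve_concave[where X=X and Y=Y])
      show "\<theta>s \<le> \<beta>" using ts by simp
      show "((\<lambda>\<theta>. Cap (f \<theta>) - Cap (f2 \<theta>)) has_real_derivative X t) (at t)" for t
        unfolding X_def Y_def by (intro DERIV_diff dcap df df2 fnn f2nn)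
      show "((\<lambda>\<theta>. Cap (f2 \<theta>)) has_real_derivative Y t) (at t)" for t
        unfolding Y_def by (intro dcap df2 f2nn)
      show "X t < 0" if "\<theta>s < t" "t < \<beta>" for t
      proof -
        have t: "\<alpha> < t" "t < \<beta>" using that ts by auto
        have "K t * H t \<le> 0" using Kneg[OF that] Hpos[of t] by (simp add: mult_nonpos_nonneg)
        thus ?thesis using XY[OF t] Ypos[OF t] by (simp add: mult_pos_neg)
      qed
      show "Y s / X s \<le> Y t / X t" if "\<theta>s < s" "s \<le> t" "t < \<beta>" for s t
      proof -
        have s': "\<alpha> < s" "s < \<beta>" and t': "\<alpha> < t" "t < \<beta>" using that ts by auto
        have "K t * H t \<le> K s * H t" using Kmono[of s t] that s' t' Hpos[of t] by (simp add: mult_right_mono)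
        also have "\<dots> \<le> K s * H s" using Kneg[of s] that Hmono[of s t] s' t'
          by (intro mult_left_mono_neg) auto
        finally have kh: "K t * H t \<le> K s * H s" .
        have ks: "K s * H s \<le> 0" using Kneg[of s] that Hpos[of s] s' by (simp add: mult_nonpos_nonneg)
        have "Y s / X s = 1 / (K s * H s - 1)" using XY[OF s'] Ypos[OF s'] by simp
        moreover have "Y t / X t = 1 / (K t * H t - 1)" using XY[OF t'] Ypos[OF t'] by simp
        moreover have "inverse (K s * H s - 1) \<le> inverse (K t * H t - 1)"
          using kh ks by (intro le_imp_inverse_le_neg) auto
        ultimately show ?thesis by (simp add: inverse_eq_divide)
      qed
    qed
    thus "\<exists>g. concave_on
              ((\<lambda>\<theta>. Cap (phi P1 P2 \<alpha> \<beta> \<theta>) - Cap (phi2 P2 \<beta> \<theta>)) ` {\<theta>s..\<beta>}) g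
           \<and> (\<forall>\<theta>\<in>{\<theta>s..\<beta>}. Cap (phi2 P2 \<beta> \<theta>)
                 = g (Cap (phi P1 P2 \<alpha> \<beta> \<theta>) - Cap (phi2 P2 \<beta> \<theta>)))"
      unfolding f_def f2_def .
  next
    define K where "K t = 1 - P2 * B t / (P1 * A t)" for t
    define H where "H t = (1 + f1 t) / (1 + f t)" for t
    define X where "X t = - P1 * A t / (2 * (1 + f1 t))" for t
    define Y where "Y t = D t / (2 * (1 + f t)) - X t" for t
    have DK: "D t = K t * (- P1 * A t)" if "\<alpha> < t" "t < \<beta>" for t
      using Apos[OF that] P unfolding K_def D_def by (simp add: field_simps)
    have Kmono: "K s \<le> K t" if "\<alpha> < s" "s \<le> t" "t < \<beta>" for s t
    proof -
      have b: "A s > 0" "A t > 0" using Apos that by auto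
      have "B t / A t \<le> B s / A s" using trig[OF that] b
        by (simp add: field_simps)
      hence "(P2 / P1) * (B t / A t) \<le> (P2 / P1) * (B s / A s)" using P
        by (intro mult_left_mono) auto
      hence "P2 * B t / (P1 * A t) \<le> P2 * B s / (P1 * A s)" by simp
      thus ?thesis unfolding K_def by simp
    qed
    have Kneg: "K t \<le> 0" if "\<alpha> < t" "t < \<theta>s" for t
    proof (rule ccontr)
      assume "\<not> K t \<le> 0"
      hence Kt: "K t > 0" by simp
      have "f \<theta>s < f t"
      proof (rule DERIV_neg_imp_decreasing_open[OF that(2) _ cf])
        fix z assume z: "t < z" "z < \<theta>s"
        have za: "\<alpha> < z" "z < \<beta>" using z ts that by auto
        have "K z > 0" using Kmono[of t z] za z that Kt by auto
        hence "D z < 0" using DK[OF za] Apos[OF za] P by (simp add: mult_pos_neg)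
        thus "\<exists>y. (f has_real_derivative y) (at z) \<and> y < 0" using df by blast
      qed
      moreover have "t \<in> {\<alpha>..\<beta>}" using that ts by auto
      hence "f t \<le> f \<theta>s" using mx unfolding f_def by blast
      ultimately show False by simp
    qed
    have Hanti: "H t \<le> H s" if "\<alpha> \<le> s" "s \<le> t" "t \<le> \<beta>" for s t
    proof -
      have a: "f1 t \<le> f1 s" "f2 s \<le> f2 t" using f1anti f2mono that by auto
      have "(1 + f1 t) * f2 s \<le> (1 + f1 s) * f2 t"
        using a f1nn f2nn by (intro mult_mono) auto
      hence "(1 + f1 t) * (1 + f s) \<le> (1 + f1 s) * (1 + f t)" unfolding feq by (simp add: algebra_simps)
      thus ?thesis unfolding H_def using fnn[of s] fnn[of t] by (simp add: divide_simps)
    qed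
    have Hpos: "H t > 0" for t unfolding H_def using fnn f1nn by (simp add: add_pos_nonneg)
    have Xneg: "X t < 0" if "\<alpha> < t" "t < \<beta>" for t
      unfolding X_def using Apos[OF that] P f1nn[of t] by (simp add: add_pos_nonneg divide_neg_pos)
    have XY: "Y t = X t * (K t * H t - 1)" if "\<alpha> < t" "t < \<beta>" for t
    proof -
      have "X t * K t * H t = D t / (2 * (1 + f t))"
      proof -
        have "1 + f t > 0" "1 + f1 t > 0" using fnn[of t] f1nn[of t] by linarith+
        thus ?thesis
          unfolding X_def H_def DK[OF that] by (simp only: aux_frac[of "1 + f1 t" "1 + f t"])
      qed
      thus ?thesis unfolding Y_def by (simp add: algebra_simps)
    qed
    have "\<exists>g. concave_on ((\<lambda>\<theta>. Cap (f1 \<theta>)) ` {\<alpha>..\<theta>s}) g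
           \<and> (\<forall>t\<in>{\<alpha>..\<theta>s}. Cap (f t) - Cap (f1 t) = g (Cap (f1 t)))"
    proof (rule curve_concave[where X=X and Y=Y])
      show "\<alpha> \<le> \<theta>s" using ts by simp
      show "((\<lambda>\<theta>. Cap (f \<theta>) - Cap (f1 \<theta>)) has_real_derivative Y t) (at t)" for t
        unfolding Y_def X_def by (intro DERIV_diff dcap df df1 fnn f1nn)
      show "((\<lambda>\<theta>. Cap (f1 \<theta>)) has_real_derivative X t) (at t)" for t
        unfolding X_def by (intro dcap df1 f1nn)
      show "X t < 0" if "\<alpha> < t" "t < \<theta>s" for t using Xneg that ts by auto
      show "Y s / X s \<le> Y t / X t" if "\<alpha> < s" "s \<le> t" "t < \<theta>s" for s t
      proof -
        have s': "\<alpha> < s" "s < \<beta>" and t': "\<alpha> < t" "t < \<beta>" using that ts by auto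
        have "K s * H s \<le> K t * H s" using Kmono[of s t] that s' t' Hpos[of s] by (simp add: mult_right_mono)
        also have "\<dots> \<le> K t * H t" using Kneg[of t] that Hanti[of s t] s' t'
          by (intro mult_left_mono_neg) auto
        finally have kh: "K s * H s \<le> K t * H t" .
        have "Y s / X s = K s * H s - 1" using XY[OF s'] Xneg[OF s'] by simp
        moreover have "Y t / X t = K t * H t - 1" using XY[OF t'] Xneg[OF t'] by simp
        ultimately show ?thesis using kh by simp
      qed
    qed
    thus "\<exists>g. concave_on ((\<lambda>\<theta>. Cap (phi1 P1 \<alpha> \<theta>)) ` {\<alpha>..\<theta>s}) g
           \<and> (\<forall>\<theta>\<in>{\<alpha>..\<theta>s}. Cap (phi P1 P2 \<alpha> \<beta> \<theta>) - Cap (phi1 P1 \<alpha> \<theta>)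
                 = g (Cap (phi1 P1 \<alpha> \<theta>)))"
      unfolding f_def f1_def .
  qed
qed
end
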